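(* Let $(V,E)$ be a finite graph and $p\in[0,1]$. Define rates on $\{0,1\}^E\times\{-1,1\}^V$ as follows: (a) if $\sigma'=\sigma$ and there is $e\in E$ with $\eta'=\eta^e$ and $\gamma_\eta(e)=1$, then $c((\eta,\sigma),(\eta',\sigma'))=\big((1-p)\mathbf 1_{\eta(e)=1}+p\mathbf 1_{\eta(e)=0}\big)\mathbf 1_{(\eta,\sigma)\in\mathcal C}$; (b) if $\sigma'=\sigma$ and there is $e\in E$ with $\eta'=\eta^e$, $\gamma_\eta(e)=0$ and $\delta_\sigma(e)=1$, then $c((\eta,\sigma),(\eta',\sigma'))=\frac12\big((1-p)\mathbf 1_{\eta(e)=1}+p\mathbf 1_{\eta(e)=0}\big)\mathbf 1_{(\eta,\sigma)\in\mathcal C}$; (c) if there are $x\in V$ and $e\in E_x$ with $\eta'=\eta^e$, $\gamma_\eta(e)=0$, $\eta(e)=\delta_\sigma(e)$, and $\sigma'(y)=-\sigma(y)$ for the vertices $y$ connected to $x$ by an open path of $\eta$ not using $e$ (including $y=x$), $\sigma'(y)=\sigma(y)$ otherwise, then $c((\eta,\sigma),(\eta',\sigma'))=\frac14\big((1-p)\mathbf 1_{\eta(e)=1}\mathbf 1_{(\eta,\sigma)\in\mathcal C}+p\mathbf 1_{\eta(e)=0}\mathbf 1_{(\eta',\sigma')\in\mathcal C}\big)$; (d) all other off-diagonal rates are $0$. Let $\eta\in\{0,1\}^E$, $e\in E$ and $\sigma\in\{-1,1\}^V$ with $(\eta,\sigma)\in\mathcal C$. Then, with sums over $\sigma'\in\{-1,1\}^V$: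 if $\gamma_\eta(e)=1$, $\sum_{\sigma'}c((\eta,\sigma),(\eta^e,\sigma'))=p\mathbf 1_{\eta(e)=0}+(1-p)\mathbf 1_{\eta(e)=1}$; if $\gamma_\eta(e)=0$ and $\eta(e)=0$, the sum equals $p/2$; if $\gamma_\eta(e)=0$ and $\eta(e)=1$, the sum equals $1-p$.
   Context: Edge configurations $\eta\in\{0,1\}^E$ (1 = open), spin configurations $\sigma\in\{-1,1\}^V$. For $e=\langle x,y\rangle$, $\delta_\sigma(e)=\mathbf 1_{\sigma(x)=\sigma(y)}$. $\mathcal C=\{(\eta,\sigma):\eta(e)\le\delta_\sigma(e)\ \forall e\in E\}$. $E_x$ is the set of edges with endvertex $x$; $\eta^e$ is $\eta$ with the value at $e$ changed. For $e=\langle x,y\rangle$, $\gamma_\eta(e)=1$ if $x,y$ are connected by a path of open edges of $\eta$ not using $e$, and $0$ otherwise. *)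

theory Defs
  imports Complex_Main "HOL-Library.FuncSet"
begin

definition simple_graph :: "'v set \<Rightarrow> 'v set set \<Rightarrow> bool" where
  "simple_graph V E \<longleftrightarrow> finite V \<and> (\<forall>e\<in>E. e \<subseteq> V \<and> card e = 2)"

definition edge_configs :: "'v set set \<Rightarrow> ('v set \<Rightarrow> nat) set" where
  "edge_configs E = (E \<rightarrow>\<^sub>E {0, 1})"

definition spin_configs :: "'v set \<Rightarrow> ('v \<Rightarrow> int) set" where
  "spin_configs V = (V \<rightarrow>\<^sub>E {-1, 1})"

definition delta :: "('v \<Rightarrow> int) \<Rightarrow> 'v set \<Rightarrow> nat" where
  "delta \<sigma> e = (if \<forall>x\<in>e. \<forall>y\<in>e. \<sigma> x = \<sigma> y then 1 else 0)"

definition compatible :: "'v set set \<Rightarrow> ('v set \<Rightarrow> nat) \<Rightarrow> ('v \<Rightarrow> int) \<Rightarrow> bool" where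
  "compatible E \<eta> \<sigma> \<longleftrightarrow> (\<forall>e\<in>E. \<eta> e \<le> delta \<sigma> e)"

definition flip_edge :: "('v set \<Rightarrow> nat) \<Rightarrow> 'v set \<Rightarrow> ('v set \<Rightarrow> nat)" where
  "flip_edge \<eta> e = \<eta>(e := 1 - \<eta> e)"

definition open_adj_avoiding :: "'v set set \<Rightarrow> ('v set \<Rightarrow> nat) \<Rightarrow> 'v set \<Rightarrow> 'v \<Rightarrow> 'v \<Rightarrow> bool" where
  "open_adj_avoiding E \<eta> e u v \<longleftrightarrow> {u, v} \<in> E \<and> {u, v} \<noteq> e \<and> \<eta> {u, v} = 1"

definition open_conn_avoiding :: "'v set set \<Rightarrow> ('v set \<Rightarrow> nat) \<Rightarrow> 'v set \<Rightarrow> 'v \<Rightarrow> 'v \<Rightarrow> bool" where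
  "open_conn_avoiding E \<eta> e = (open_adj_avoiding E \<eta> e)\<^sup>*\<^sup>*"

definition gamma :: "'v set set \<Rightarrow> ('v set \<Rightarrow> nat) \<Rightarrow> 'v set \<Rightarrow> bool" where
  "gamma E \<eta> e \<longleftrightarrow> (\<forall>x\<in>e. \<forall>y\<in>e. open_conn_avoiding E \<eta> e x y)"

definition flip_cluster ::
  "'v set \<Rightarrow> 'v set set \<Rightarrow> ('v set \<Rightarrow> nat) \<Rightarrow> 'v set \<Rightarrow> 'v \<Rightarrow> ('v \<Rightarrow> int) \<Rightarrow> ('v \<Rightarrow> int)" where
  "flip_cluster V E \<eta> e x \<sigma> =
     restrict (\<lambda>y. if open_conn_avoiding E \<eta> e x y then - \<sigma> y else \<sigma> y) V"

definition base_rate :: "real \<Rightarrow> ('v set \<Rightarrow> nat) \<Rightarrow> 'v set \<Rightarrow> real" where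
  "base_rate p \<eta> e = (1 - p) * (if \<eta> e = 1 then 1 else 0) + p * (if \<eta> e = 0 then 1 else 0)"

definition ind :: "bool \<Rightarrow> real" where
  "ind b = (if b then 1 else 0)"

text \<open>The edge e (and vertex x) witnessing each case
  are unique whenever they exist, so choosing them with SOME is harmless. Diagonal rates are
  not specified by the paper; we set them to 0 (they play no role below).\<close>
definition rate ::
  "real \<Rightarrow> 'v set \<Rightarrow> 'v set set \<Rightarrow> ('v set \<Rightarrow> nat) \<times> ('v \<Rightarrow> int) \<Rightarrow> ('v set \<Rightarrow> nat) \<times> ('v \<Rightarrow> int) \<Rightarrow> real"
where
  "rate p V E s s' =
    (let (\<eta>, \<sigma>) = s; (\<eta>', \<sigma>') = s' in
     if s = s' then 0
     else if \<exists>e\<in>E. \<sigma>' = \<sigma> \<and> \<eta>' = flip_edge \<eta> e \<and> gamma E \<eta> e then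
       (let e = (SOME e. e \<in> E \<and> \<sigma>' = \<sigma> \<and> \<eta>' = flip_edge \<eta> e \<and> gamma E \<eta> e) in
         base_rate p \<eta> e * ind (compatible E \<eta> \<sigma>))
     else if \<exists>e\<in>E. \<sigma>' = \<sigma> \<and> \<eta>' = flip_edge \<eta> e \<and> \<not> gamma E \<eta> e \<and> delta \<sigma> e = 1 then
       (let e = (SOME e. e \<in> E \<and> \<sigma>' = \<sigma> \<and> \<eta>' = flip_edge \<eta> e \<and> \<not> gamma E \<eta> e \<and> delta \<sigma> e = 1) in
         1/2 * base_rate p \<eta> e * ind (compatible E \<eta> \<sigma>))
     else if \<exists>x\<in>V. \<exists>e\<in>E. x \<in> e \<and> \<eta>' = flip_edge \<eta> e \<and> \<not> gamma E \<eta> e \<and> \<eta> e = delta \<sigma> e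
                        \<and> \<sigma>' = flip_cluster V E \<eta> e x \<sigma> then
       (let e = (SOME e. \<exists>x\<in>V. e \<in> E \<and> x \<in> e \<and> \<eta>' = flip_edge \<eta> e \<and> \<not> gamma E \<eta> e
                        \<and> \<eta> e = delta \<sigma> e \<and> \<sigma>' = flip_cluster V E \<eta> e x \<sigma>) in
         1/4 * ((1 - p) * ind (\<eta> e = 1) * ind (compatible E \<eta> \<sigma>)
                + p * ind (\<eta> e = 0) * ind (compatible E \<eta>' \<sigma>')))
     else 0)"

end

theory Submission imports Defs begin

lemma flip_edge_inj:
  assumes "\<eta> e \<in> {0,1}"
  shows "(flip_edge \<eta> e = flip_edge \<eta> e') \<longleftrightarrow> e' = e"
proof
  assume h: "flip_edge \<eta> e = flip_edge \<eta> e'"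
  show "e' = e"
  proof (rule ccontr)
    assume "e' \<noteq> e"
    then have "flip_edge \<eta> e' e = \<eta> e" by (simp add: flip_edge_def)
    moreover have "flip_edge \<eta> e e = 1 - \<eta> e" by (simp add: flip_edge_def)
    ultimately show False using h assms by auto
  qed
qed simp

lemma rate_flip:
  assumes "e \<in> E" "\<eta> e \<in> {0,1}"
  shows "rate p V E (\<eta>,\<sigma>) (flip_edge \<eta> e, \<sigma>') =
    (if \<sigma>' = \<sigma> \<and> gamma E \<eta> e then base_rate p \<eta> e * ind (compatible E \<eta> \<sigma>)
     else if \<sigma>' = \<sigma> \<and> \<not> gamma E \<eta> e \<and> delta \<sigma> e = 1 then 1/2 * base_rate p \<eta> e * ind (compatible E \<eta> \<sigma>)
     else if (\<exists>x\<in>V. x \<in> e \<and> \<not> gamma E \<eta> e \<and> \<eta> e = delta \<sigma> e \<and> \<sigma>' = flip_cluster V E \<eta> e x \<sigma>)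
       then 1/4 * ((1 - p) * ind (\<eta> e = 1) * ind (compatible E \<eta> \<sigma>)
                + p * ind (\<eta> e = 0) * ind (compatible E (flip_edge \<eta> e) \<sigma>'))
     else 0)"
proof -
  have U: "\<And>e'. (flip_edge \<eta> e = flip_edge \<eta> e') \<longleftrightarrow> e' = e" using flip_edge_inj[of \<eta> e] assms(2) by blast
  have ne: "flip_edge \<eta> e \<noteq> \<eta>" using assms(2) by (auto simp: flip_edge_def fun_eq_iff intro!: exI[of _ e])
  have S1: "(SOME e'. e' \<in> E \<and> \<sigma>' = \<sigma> \<and> flip_edge \<eta> e = flip_edge \<eta> e' \<and> gamma E \<eta> e') = e"
    if "\<sigma>' = \<sigma>" "gamma E \<eta> e" using that assms U by (intro some_equality) auto
  have S2: "(SOME e'. e' \<in> E \<and> \<sigma>' = \<sigma> \<and> flip_edge \<eta> e = flip_edge \<eta> e' \<and> \<not> gamma E \<eta> e' \<and> delta \<sigma> e' = 1) = e"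
    if "\<sigma>' = \<sigma>" "\<not> gamma E \<eta> e" "delta \<sigma> e = 1" using that assms U by (intro some_equality) auto
  have S3: "(SOME e'. \<exists>x\<in>V. e' \<in> E \<and> x \<in> e' \<and> flip_edge \<eta> e = flip_edge \<eta> e' \<and> \<not> gamma E \<eta> e'
                        \<and> \<eta> e' = delta \<sigma> e' \<and> \<sigma>' = flip_cluster V E \<eta> e' x \<sigma>) = e"
    if "\<exists>x\<in>V. x \<in> e \<and> \<not> gamma E \<eta> e \<and> \<eta> e = delta \<sigma> e \<and> \<sigma>' = flip_cluster V E \<eta> e x \<sigma>"
    using that assms U by (intro some_equality) auto
  show ?thesis
    unfolding rate_def using ne U S1 S2 S3 assms(1)
    by (simp only: Let_def prod.case prod.inject) (auto simp: Let_def)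
qed

lemma adj_sym: "open_adj_avoiding E \<eta> e u v \<Longrightarrow> open_adj_avoiding E \<eta> e v u"
  unfolding open_adj_avoiding_def by (simp add: insert_commute)

lemma conn_sym: "open_conn_avoiding E \<eta> e u v \<Longrightarrow> open_conn_avoiding E \<eta> e v u"
  unfolding open_conn_avoiding_def
proof (induction rule: rtranclp_induct)
  case base then show ?case by simp
next
  case (step y z)
  then show ?case using adj_sym[OF step(2)] by (meson converse_rtranclp_into_rtranclp)
qed

lemma conn_refl: "open_conn_avoiding E \<eta> e u u"
  unfolding open_conn_avoiding_def by simp

lemma compat_flip:
  assumes sg: "simple_graph V E" and c: "compatible E \<eta> \<sigma>" and e0: "\<eta> e = 0"
    and exy: "e = {x,y}" and nc: "\<not> open_conn_avoiding E \<eta> e x y"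
    and sxy: "\<sigma> x \<noteq> \<sigma> y" and sV: "\<sigma> \<in> spin_configs V" and eE: "e \<in> E"
  shows "compatible E (flip_edge \<eta> e) (flip_cluster V E \<eta> e x \<sigma>)"
  unfolding compatible_def
proof
  fix f assume fE: "f \<in> E"
  let ?s = "flip_cluster V E \<eta> e x \<sigma>"
  have xyV: "x \<in> V" "y \<in> V" using sg eE exy unfolding simple_graph_def by auto
  show "flip_edge \<eta> e f \<le> delta ?s f"
  proof (cases "f = e")
    case True
    have "\<sigma> x \<in> {-1,1}" "\<sigma> y \<in> {-1,1}" using sV xyV unfolding spin_configs_def by auto
    then have "- \<sigma> x = \<sigma> y" using sxy by auto
    moreover have "open_conn_avoiding E \<eta> e x x" by (rule conn_refl)
    ultimately have "?s x = ?s y" using nc xyV unfolding flip_cluster_def by auto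
    then have "delta ?s f = 1" using True exy unfolding delta_def by auto
    then show ?thesis using True e0 by (simp add: flip_edge_def)
  next
    case False
    then have fe: "flip_edge \<eta> e f = \<eta> f" by (simp add: flip_edge_def)
    show ?thesis
    proof (cases "\<eta> f = 1")
      case False
      have "\<eta> f \<le> delta \<sigma> f" using c fE unfolding compatible_def by blast
      then have "\<eta> f \<le> 1" unfolding delta_def by (auto split: if_splits)
      then have "\<eta> f = 0" using False by simp
      then show ?thesis using fe by simp
    next
      case True
      have "delta \<sigma> f \<ge> 1" using c fE True unfolding compatible_def by fastforce
      then have dl: "\<forall>a\<in>f. \<forall>b\<in>f. \<sigma> a = \<sigma> b" by (metis delta_def not_one_le_zero)
      have "f \<subseteq> V" "card f = 2" using sg fE unfolding simple_graph_def by auto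
      then obtain u v where fuv: "f = {u,v}" "u \<noteq> v" unfolding card_2_iff by blast
      have uvV: "u \<in> V" "v \<in> V" using \<open>f \<subseteq> V\<close> fuv by auto
      have adj: "open_adj_avoiding E \<eta> e u v" unfolding open_adj_avoiding_def
        using fE fuv False True by auto
      have "open_conn_avoiding E \<eta> e x u \<longleftrightarrow> open_conn_avoiding E \<eta> e x v"
        using rtranclp.rtrancl_into_rtrancl[of "open_adj_avoiding E \<eta> e" x u v, OF _ adj]
          rtranclp.rtrancl_into_rtrancl[of "open_adj_avoiding E \<eta> e" x v u, OF _ adj_sym[OF adj]]
        unfolding open_conn_avoiding_def by blast
      moreover have "\<sigma> u = \<sigma> v" using dl unfolding fuv(1) by blast
      ultimately have "?s u = ?s v" using uvV unfolding flip_cluster_def by simp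
      then have "delta ?s f = 1" unfolding fuv(1) delta_def by auto
      then show ?thesis using fe True by simp
    qed
  qed
qed

lemma sum3:
  assumes "finite S" "s \<in> S" "a \<in> S" "b \<in> S" "a \<noteq> s" "b \<noteq> s" "a \<noteq> b"
  shows "(\<Sum>t\<in>S. (if t = s then A else 0) + (if t = a then B else 0) + (if t = b then B else 0))
         = A + 2 * (B::real)"
  using assms by (simp add: sum.distrib)

theorem proposition8:
  fixes V :: "'v set" and E :: "'v set set" and p :: real
    and \<eta> :: "'v set \<Rightarrow> nat" and \<sigma> :: "'v \<Rightarrow> int" and e :: "'v set"
  assumes "simple_graph V E"
    and "0 \<le> p" and "p \<le> 1"
    and "\<eta> \<in> edge_configs E" and "\<sigma> \<in> spin_configs V"
    and "e \<in> E"
    and "compatible E \<eta> \<sigma>"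
  shows "(gamma E \<eta> e \<longrightarrow>
           (\<Sum>\<sigma>'\<in>spin_configs V. rate p V E (\<eta>, \<sigma>) (flip_edge \<eta> e, \<sigma>'))
             = p * ind (\<eta> e = 0) + (1 - p) * ind (\<eta> e = 1))
       \<and> (\<not> gamma E \<eta> e \<and> \<eta> e = 0 \<longrightarrow>
           (\<Sum>\<sigma>'\<in>spin_configs V. rate p V E (\<eta>, \<sigma>) (flip_edge \<eta> e, \<sigma>')) = p / 2)
       \<and> (\<not> gamma E \<eta> e \<and> \<eta> e = 1 \<longrightarrow>
           (\<Sum>\<sigma>'\<in>spin_configs V. rate p V E (\<eta>, \<sigma>) (flip_edge \<eta> e, \<sigma>')) = 1 - p)"
proof -
  note sg = assms(1) and sV = assms(5) and eE = assms(6) and c = assms(7)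
  have e01: "\<eta> e \<in> {0,1}" using assms(4) eE unfolding edge_configs_def by auto
  have fin: "finite (spin_configs V)" using sg unfolding simple_graph_def spin_configs_def
    by (simp add: finite_PiE)
  have "e \<subseteq> V" "card e = 2" using sg eE unfolding simple_graph_def by auto
  then obtain x y where exy: "e = {x,y}" "x \<noteq> y" unfolding card_2_iff by blast
  have xyV: "x \<in> V" "y \<in> V" using \<open>e \<subseteq> V\<close> exy by auto
  have sx: "\<sigma> x \<in> {-1,1}" "\<sigma> y \<in> {-1,1}" using PiE_mem[OF sV[unfolded spin_configs_def]] xyV by blast+
  let ?C = "open_conn_avoiding E \<eta> e"
  have gam: "gamma E \<eta> e \<longleftrightarrow> ?C x y"
  proof -
    define C where "C = ?C"
    have "gamma E \<eta> e = (\<forall>a\<in>e. \<forall>b\<in>e. C a b)" by (simp add: gamma_def C_def)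
    also have "\<dots> = (\<forall>a\<in>{x,y}. \<forall>b\<in>{x,y}. C a b)" using exy(1) by simp
    also have "\<dots> = C x y" using conn_refl[of E \<eta> e] conn_sym[of E \<eta> e y x] conn_sym[of E \<eta> e x y]
      unfolding C_def by auto
    finally show ?thesis unfolding C_def .
  qed
  have del: "delta \<sigma> e = (if \<sigma> x = \<sigma> y then 1 else 0)"
    unfolding delta_def exy by auto
  let ?R = "\<lambda>\<sigma>'. rate p V E (\<eta>, \<sigma>) (flip_edge \<eta> e, \<sigma>')"
  note rf = rate_flip[of e E \<eta> p V \<sigma>, OF eE e01]
  have ic: "ind (compatible E \<eta> \<sigma>) = 1" using c by (simp add: ind_def)
  show ?thesis
  proof (cases "gamma E \<eta> e")
    case g: True
    have "?R \<sigma>' = (if \<sigma>' = \<sigma> then base_rate p \<eta> e else 0)" for \<sigma>'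
      using g ic by (simp add: rf)
    then have "sum ?R (spin_configs V) = base_rate p \<eta> e"
      using fin sV by simp
    then show ?thesis using g e01 by (auto simp: base_rate_def ind_def)
  next
    case ng: False
    then have ncxy: "\<not> ?C x y" using gam by simp
    then have ncyx: "\<not> ?C y x" using conn_sym[of E \<eta> e y x] by blast
    define a where "a = flip_cluster V E \<eta> e x \<sigma>"
    define b where "b = flip_cluster V E \<eta> e y \<sigma>"
    have sp: "flip_cluster V E \<eta> e z \<sigma> \<in> spin_configs V" for z
      using sV unfolding spin_configs_def flip_cluster_def by (auto simp: PiE_iff)
    have ax: "a x = - \<sigma> x" "b y = - \<sigma> y" "b x = \<sigma> x"
      unfolding a_def b_def flip_cluster_def using xyV conn_refl[of E \<eta> e x] conn_refl[of E \<eta> e y] ncyx by auto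
    have nz: "\<sigma> x \<noteq> 0" "\<sigma> y \<noteq> 0" using sx by auto
    have "a x \<noteq> \<sigma> x" "b y \<noteq> \<sigma> y" "a x \<noteq> b x" using ax nz by simp_all
    then have ab: "a \<in> spin_configs V" "b \<in> spin_configs V" "a \<noteq> \<sigma>" "b \<noteq> \<sigma>" "a \<noteq> b"
      using sp[of x] sp[of y] unfolding a_def[symmetric] b_def[symmetric] by metis+
    have EX: "(\<exists>z\<in>V. z \<in> e \<and> \<not> gamma E \<eta> e \<and> \<eta> e = delta \<sigma> e \<and> \<sigma>' = flip_cluster V E \<eta> e z \<sigma>)
       \<longleftrightarrow> (\<eta> e = delta \<sigma> e \<and> (\<sigma>' = a \<or> \<sigma>' = b))" for \<sigma>'
    proof -
      have ex: "\<And>Q. (\<exists>z\<in>V. z \<in> e \<and> Q z) \<longleftrightarrow> Q x \<or> Q y" using xyV exy(1) by auto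
      show ?thesis by (simp only: ex) (auto simp: a_def b_def ng)
    qed
    have R: "?R \<sigma>' =
      (if \<sigma>' = \<sigma> then (if delta \<sigma> e = 1 then 1/2 * base_rate p \<eta> e else 0)
       else if \<eta> e = delta \<sigma> e \<and> (\<sigma>' = a \<or> \<sigma>' = b) then
         1/4 * ((1 - p) * ind (\<eta> e = 1) + p * ind (\<eta> e = 0) * ind (compatible E (flip_edge \<eta> e) \<sigma>'))
       else 0)" for \<sigma>'
    proof (cases "\<sigma>' = \<sigma>")
      case True
      have "\<not> (\<sigma>' = a \<or> \<sigma>' = b)" using True ab by blast
      then show ?thesis unfolding rf EX using True ng ic
        by (simp only: if_True if_False simp_thms mult_1_right)
    next
      case False
      then show ?thesis unfolding rf EX using False ng
        by (simp only: if_True if_False simp_thms mult_1_right ic)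
    qed
    show ?thesis
    proof (intro conjI impI)
      show "\<not> gamma E \<eta> e \<and> \<eta> e = 0 \<Longrightarrow> sum ?R (spin_configs V) = p / 2"
      proof (cases "\<sigma> x = \<sigma> y")
        case True
        assume "\<not> gamma E \<eta> e \<and> \<eta> e = 0"
        then have "?R \<sigma>' = (if \<sigma>' = \<sigma> then p/2 else 0)" for \<sigma>'
          using True del unfolding R by (cases "\<sigma>' = \<sigma>") (simp_all only: if_True if_False simp_thms, simp_all add: base_rate_def)
        then show ?thesis using fin sV by simp
      next
        case False
        assume h: "\<not> gamma E \<eta> e \<and> \<eta> e = 0"
        have ca: "compatible E (flip_edge \<eta> e) a" unfolding a_def
          using compat_flip[OF sg c _ exy(1) ncxy False sV eE] h by simp
        have cb: "compatible E (flip_edge \<eta> e) b" unfolding b_def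
          using compat_flip[OF sg c _ _ ncyx _ sV eE] h exy False by (simp add: insert_commute)
        have "?R \<sigma>' = (if \<sigma>' = \<sigma> then 0 else 0) + (if \<sigma>' = a then p/4 else 0) + (if \<sigma>' = b then p/4 else 0)" for \<sigma>'
        proof -
          have d0: "delta \<sigma> e = 0" using del False by simp
          consider "\<sigma>' = a" | "\<sigma>' = b" | "\<sigma>' \<noteq> a" "\<sigma>' \<noteq> b" by blast
          then show ?thesis
          proof cases
            case 1 then show ?thesis using ab ca h d0 unfolding R by (simp only: if_True if_False simp_thms) (simp add: ind_def)
          next
            case 2 then show ?thesis using ab cb h d0 unfolding R by (simp only: if_True if_False simp_thms) (simp add: ind_def)
          next
            case 3 then show ?thesis using h d0 unfolding R by (simp only: if_True if_False simp_thms) simp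
          qed
        qed
        then show ?thesis using sum3[OF fin sV ab(1,2,3,4,5), of 0 "p/4"] by simp
      qed
    next
      assume h: "\<not> gamma E \<eta> e \<and> \<eta> e = 1"
      have le: "\<eta> e \<le> delta \<sigma> e" using c eE unfolding compatible_def by blast
      have "delta \<sigma> e \<le> 1" unfolding delta_def by simp
      then have d1: "delta \<sigma> e = 1" using le h by linarith
      have "?R \<sigma>' = (if \<sigma>' = \<sigma> then (1-p)/2 else 0) + (if \<sigma>' = a then (1-p)/4 else 0) + (if \<sigma>' = b then (1-p)/4 else 0)" for \<sigma>'
      proof -
        consider "\<sigma>' = \<sigma>" | "\<sigma>' = a" | "\<sigma>' = b" | "\<sigma>' \<noteq> \<sigma>" "\<sigma>' \<noteq> a" "\<sigma>' \<noteq> b" by blast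
        then show ?thesis
        proof cases
          case 1 then show ?thesis using ab h d1 unfolding R by (simp only: if_True if_False simp_thms) (simp add: base_rate_def)
        next
          case 2 then show ?thesis using ab h d1 unfolding R by (simp only: if_True if_False simp_thms) (simp add: ind_def)
        next
          case 3 then show ?thesis using ab h d1 unfolding R by (simp only: if_True if_False simp_thms) (simp add: ind_def)
        next
          case 4 then show ?thesis using h d1 unfolding R by (simp only: if_True if_False simp_thms)
        qed
      qed
      then show "sum ?R (spin_configs V) = 1 - p" using sum3[OF fin sV ab(1,2,3,4,5), of "(1-p)/2" "(1-p)/4"] by (simp add: field_simps)
    qed (use ng in auto)
  qed
qed

end
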